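(* Let $G$ be a connected nontrivial graph with $m$ vertices and let $n\geq4$. If $\min\{n^2\lambda(G),\ (n-1)(m+2e(G))\}> 2n\delta(G)+2n-4$, then $G\boxtimes K_n$ is super restricted edge-connected.
   Context: All graphs are finite, simple and undirected; "nontrivial" means having at least two vertices. $K_n$ denotes the complete graph on $n$ vertices. For a graph $G$: $e(G)=|E(G)|$; $\delta(G)$ is the minimum degree; $\lambda(G)$ is the edge-connectivity. A restricted edge-cut of a connected graph $G$ is a set $S\subseteq E(G)$ such that $G-S$ is disconnected and every component of $G-S$ has at least $2$ vertices; $\lambda'(G)$ is the minimum cardinality of a restricted edge-cut. A graph is super restricted edge-connected if every minimum restricted edge-cut $S$ isolates an edge, i.e. some component of $G-S$ consists of exactly two (adjacent) vertices. The strong product $G\boxtimes H$ has vertex set $V(G)\times V(H)$, with $(x_1,y_1)$ and $(x_2,y_2)$ adjacent iff either $x_1=x_2$ and $y_1y_2\in E(H)$, or $y_1=y_2$ and $x_1x_2\in E(G)$, or $x_1x_2\in E(G)$ and $y_1y_2\in E(H)$. *)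

theory Defs
  imports Main
begin

type_synonym 'a graph = "'a set \<times> 'a set set"

definition verts :: "'a graph \<Rightarrow> 'a set" where "verts G = fst G"
definition edges :: "'a graph \<Rightarrow> 'a set set" where "edges G = snd G"

definition simple_graph :: "'a graph \<Rightarrow> bool" where
  "simple_graph G \<longleftrightarrow> finite (verts G) \<and>
     (\<forall>e\<in>edges G. \<exists>x y. x \<noteq> y \<and> x \<in> verts G \<and> y \<in> verts G \<and> e = {x, y})"

definition adj_rel :: "'a graph \<Rightarrow> ('a \<times> 'a) set" where
  "adj_rel G = {(x, y). {x, y} \<in> edges G \<and> x \<noteq> y}"

definition graph_connected :: "'a graph \<Rightarrow> bool" where
  "graph_connected G \<longleftrightarrow> verts G \<noteq> {} \<and>
     (\<forall>x\<in>verts G. \<forall>y\<in>verts G. (x, y) \<in> (adj_rel G)\<^sup>*)"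

definition del_edges :: "'a graph \<Rightarrow> 'a set set \<Rightarrow> 'a graph" where
  "del_edges G S = (verts G, edges G - S)"

definition components :: "'a graph \<Rightarrow> 'a set set" where
  "components G = (\<lambda>x. {y \<in> verts G. (x, y) \<in> (adj_rel G)\<^sup>*}) ` verts G"

definition degree :: "'a graph \<Rightarrow> 'a \<Rightarrow> nat" where
  "degree G v = card {e \<in> edges G. v \<in> e}"

definition min_degree :: "'a graph \<Rightarrow> nat" where
  "min_degree G = Min (degree G ` verts G)"

definition edge_cut :: "'a graph \<Rightarrow> 'a set set \<Rightarrow> bool" where
  "edge_cut G S \<longleftrightarrow> S \<subseteq> edges G \<and> \<not> graph_connected (del_edges G S)"

definition edge_connectivity :: "'a graph \<Rightarrow> nat" where
  "edge_connectivity G = Min (card ` {S. edge_cut G S})"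

definition restricted_edge_cut :: "'a graph \<Rightarrow> 'a set set \<Rightarrow> bool" where
  "restricted_edge_cut G S \<longleftrightarrow> S \<subseteq> edges G \<and> \<not> graph_connected (del_edges G S) \<and>
     (\<forall>C\<in>components (del_edges G S). card C \<ge> 2)"

definition min_restricted_edge_cut :: "'a graph \<Rightarrow> 'a set set \<Rightarrow> bool" where
  "min_restricted_edge_cut G S \<longleftrightarrow> restricted_edge_cut G S \<and>
     (\<forall>T. restricted_edge_cut G T \<longrightarrow> card S \<le> card T)"

definition super_restricted_edge_connected :: "'a graph \<Rightarrow> bool" where
  "super_restricted_edge_connected G \<longleftrightarrow>
     (\<forall>S. min_restricted_edge_cut G S \<longrightarrow> (\<exists>C\<in>components (del_edges G S). card C = 2))"

definition complete_graph :: "nat \<Rightarrow> nat graph" where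
  "complete_graph n = ({0..<n}, {{x, y} | x y. x < n \<and> y < n \<and> x \<noteq> y})"

definition strong_product :: "'a graph \<Rightarrow> 'b graph \<Rightarrow> ('a \<times> 'b) graph" where
  "strong_product G H = (verts G \<times> verts H,
     {{(x1, y1), (x2, y2)} | x1 y1 x2 y2.
        x1 \<in> verts G \<and> x2 \<in> verts G \<and> y1 \<in> verts H \<and> y2 \<in> verts H \<and>
        ((x1 = x2 \<and> {y1, y2} \<in> edges H) \<or> (y1 = y2 \<and> {x1, x2} \<in> edges G) \<or>
         ({x1, x2} \<in> edges G \<and> {y1, y2} \<in> edges H))})"

end

theory Submission
  imports Defs
begin


lemma ee_aux: "x \<noteq> y \<Longrightarrow> (u::'a) \<noteq> v \<Longrightarrow> - (if (x,y) \<in> {(u,v),(v,u)} then 1 else 0) \<le> ((if x=u then 1 else 0) - (if x=v then 1 else 0)) * ((if y=u then 1 else 0) - (if y=v then 1 else (0::int)))"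
  by (auto split: if_split)

lemma ee_aux2: "e = (\<lambda>x. (if x=u then 1 else 0) - (if x=v then 1 else (0::int))) \<Longrightarrow> x \<noteq> y \<Longrightarrow> (u::'a) \<noteq> v \<Longrightarrow> - (if (x,y) \<in> {(u,v),(v,u)} then 1 else 0) \<le> e x * e y"
  using ee_aux by simp

locale wg =
  fixes V :: "'a set" and Adj :: "('a\<times>'a) set" and n :: int
  assumes finV: "finite V" and AdjV: "Adj \<subseteq> V \<times> V" and irr: "(x,x) \<notin> Adj"
    and symA: "(x,y)\<in>Adj \<Longrightarrow> (y,x)\<in>Adj"
begin

lemma finA: "finite Adj" using finV AdjV finite_subset by blast

definition Fv where "Fv a = (\<Sum>x\<in>V. a x * (n - a x))"
definition P where "P a = (\<Sum>p\<in>Adj. a (fst p) * (n - a (snd p)))"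
definition F where "F a = Fv a + P a"
definition cross where "cross A = card {p\<in>Adj. fst p \<in> A \<and> snd p \<notin> A}"
definition valid where "valid a = (\<forall>x\<in>V. 0 \<le> a x \<and> a x \<le> n)"
definition spl where "spl a = {x\<in>V. 0 < a x \<and> a x < n}"

definition Bq where "Bq a e = (\<Sum>x\<in>V. e x*(n - a x) - a x * e x) +
   (\<Sum>p\<in>Adj. e (fst p) * (n - a (snd p)) - a (fst p) * e (snd p))"
definition Qq where "Qq e = - (\<Sum>x\<in>V. e x * e x) - (\<Sum>p\<in>Adj. e (fst p) * e (snd p))"

lemma quad: "F (\<lambda>x. a x + s * e x) = F a + s * Bq a e + s^2 * Qq e"
proof -
  have 1: "Fv (\<lambda>x. a x + s * e x) = (\<Sum>x\<in>V. a x*(n-a x) + s*(e x*(n - a x) - a x*e x) + s^2*(-(e x*e x)))"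
    unfolding Fv_def by (rule sum.cong) (auto simp: algebra_simps power2_eq_square)
  have 2: "P (\<lambda>x. a x + s * e x) = (\<Sum>p\<in>Adj. a (fst p) * (n - a (snd p)) + s*(e (fst p) * (n - a (snd p)) - a (fst p) * e (snd p)) + s^2*(-(e (fst p) * e (snd p))))"
    unfolding P_def by (rule sum.cong) (auto simp: algebra_simps power2_eq_square)
  show ?thesis unfolding F_def 1 2 Bq_def Qq_def Fv_def P_def
    by (simp only: sum.distrib sum_distrib_left[symmetric] sum_negf) (simp add: algebra_simps)
qed


lemma Q_le:
  assumes uV: "u\<in>V" and vV: "v\<in>V" and uv: "u\<noteq>v"
  shows "Qq (\<lambda>x. (if x=u then 1 else 0) - (if x=v then 1 else 0)) \<le> (0::int)"
proof -
  define e :: "'a \<Rightarrow> int" where "e = (\<lambda>x. (if x=u then 1 else 0) - (if x=v then 1 else 0))"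
  have "(\<Sum>x\<in>V. e x * e x) = (\<Sum>x\<in>V. (if x=u then 1 else 0) + (if x=v then 1 else 0))"
    by (rule sum.cong) (auto simp: e_def uv)
  also have "\<dots> = 2" using uV vV finV by (simp add: sum.distrib)
  finally have s1: "(\<Sum>x\<in>V. e x * e x) = 2" .
  define T where "T = {(u,v),(v,u)}"
  have c1: "(\<Sum>p\<in>Adj. e (fst p) * e (snd p)) \<ge> (\<Sum>p\<in>Adj. - (if p \<in> T then 1 else 0))"
  proof (rule sum_mono)
    fix p assume pA: "p \<in> Adj"
    obtain x y where p: "p = (x,y)" by (cases p)
    have xy: "x \<noteq> y" using pA irr unfolding p by blast
    show "- (if p \<in> T then 1 else 0) \<le> e (fst p) * e (snd p)"
      unfolding p fst_conv snd_conv T_def by (rule ee_aux2[OF e_def xy uv])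
  qed
  have c2: "(\<Sum>p\<in>Adj. - (if p \<in> T then 1 else (0::int))) = - int (card (Adj \<inter> T))"
  proof -
    have "(\<Sum>p\<in>Adj. (if p \<in> T then 1 else (0::int))) = (\<Sum>p\<in>Adj \<inter> T. 1)"
      by (rule sum.inter_restrict[OF finA, of "\<lambda>_. 1::int" T, symmetric])
    also have "\<dots> = int (card (Adj \<inter> T))" by simp
    finally show ?thesis by (simp only: sum_negf)
  qed
  have c3: "card (Adj \<inter> T) \<le> 2"
  proof -
    have "card T \<le> 2" unfolding T_def by (rule card_insert_le_m1) auto
    moreover have "card (Adj \<inter> T) \<le> card T" by (rule card_mono) (simp_all add: T_def)
    ultimately show ?thesis by linarith
  qed
  have "(\<Sum>p\<in>Adj. e (fst p) * e (snd p)) \<ge> -2" using c1 c2 c3 by linarith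
  then have "Qq e \<le> 0" using s1 unfolding Qq_def by linarith
  then show ?thesis unfolding e_def .
qed


lemma finspl: "finite (spl a)" unfolding spl_def using finV by simp

lemma smooth_step:
  assumes va: "valid a" and us: "u \<in> spl a" and vs: "v \<in> spl a" and uv: "u \<noteq> v"
  shows "\<exists>b. valid b \<and> sum b V = sum a V \<and> spl b \<subset> spl a \<and> F b \<le> F a"
proof -
  define e :: "'a \<Rightarrow> int" where "e = (\<lambda>x. (if x=u then 1 else 0) - (if x=v then 1 else 0))"
  have uV: "u \<in> V" and vV: "v \<in> V" using us vs by (auto simp: spl_def)
  have au: "0 < a u" "a u < n" and av: "0 < a v" "a v < n" using us vs by (auto simp: spl_def)
  define B where "B = Bq a e"
  have Q: "Qq e \<le> 0" unfolding e_def by (rule Q_le[OF uV vV uv])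
  define s where "s = (if B \<ge> 0 then - min (a u) (n - a v) else min (n - a u) (a v))"
  define b where "b = (\<lambda>x. a x + s * e x)"
  have bx: "b x = (if x = u then a u + s else if x = v then a v - s else a x)" for x
    unfolding b_def e_def using uv by auto
  have sB: "s * B \<le> 0" unfolding s_def
    using au av by (cases "B \<ge> 0") (auto simp: mult_le_0_iff)
  have sQ: "s^2 * Qq e \<le> 0" using Q by (simp add: mult_nonneg_nonpos)
  have Fb: "F b \<le> F a" unfolding b_def quad B_def[symmetric] using sB sQ by linarith
  have bu: "0 \<le> b u \<and> b u \<le> n" and bv: "0 \<le> b v \<and> b v \<le> n"
    using au av uv unfolding bx s_def by auto
  have vb: "valid b" using va bu bv unfolding valid_def
    by (metis bx)
  have "sum b V = sum a V + s * sum e V" unfolding b_def by (simp add: sum.distrib sum_distrib_left)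
  moreover have "sum e V = 0" unfolding e_def using uV vV finV by (simp add: sum_subtractf)
  ultimately have sb: "sum b V = sum a V" by simp
  have sub: "spl b \<subseteq> spl a"
  proof
    fix x assume "x \<in> spl b"
    then show "x \<in> spl a" using us vs unfolding spl_def by (cases "x = u"; cases "x = v") (auto simp: bx)
  qed
  have "u \<notin> spl b \<or> v \<notin> spl b"
  proof (cases "B \<ge> 0")
    case True then have "s = - min (a u) (n - a v)" by (simp add: s_def)
    then show ?thesis using uv by (auto simp: spl_def bx min_def split: if_splits)
  next
    case False then have "s = min (n - a u) (a v)" by (simp add: s_def)
    then show ?thesis using uv by (auto simp: spl_def bx min_def split: if_splits)
  qed
  then have "spl b \<subset> spl a" using sub us vs by blast
  then show ?thesis using vb sb Fb by blast
qed

lemma smooth: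
  "valid a \<Longrightarrow> \<exists>b. valid b \<and> sum b V = sum a V \<and> card (spl b) \<le> 1 \<and> F b \<le> F a"
proof (induction "card (spl a)" arbitrary: a rule: less_induct)
  case less
  show ?case
  proof (cases "card (spl a) \<le> 1")
    case True then show ?thesis using less.prems by blast
  next
    case False
    then have "spl a \<noteq> {}" by auto
    then obtain u where u: "u \<in> spl a" by blast
    have "card (spl a - {u}) > 0" using False u finspl by simp
    then obtain v where v: "v \<in> spl a - {u}" by (metis card_gt_0_iff ex_in_conv)
    obtain b where b: "valid b" "sum b V = sum a V" "spl b \<subset> spl a" "F b \<le> F a"
      using smooth_step[OF less.prems u, of v] v by auto
    have "card (spl b) < card (spl a)" using b(3) finspl by (rule psubset_card_mono[rotated])
    from less.hyps[OF this b(1)] obtain c where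
      "valid c" "sum c V = sum b V" "card (spl c) \<le> 1" "F c \<le> F b" by blast
    then show ?thesis using b by auto
  qed
qed


lemma P_ind: "P (\<lambda>x. if x \<in> A then n else 0) = n^2 * int (cross A)"
proof -
  have "P (\<lambda>x. if x \<in> A then n else 0) = (\<Sum>p\<in>Adj. if fst p \<in> A \<and> snd p \<notin> A then n^2 else 0)"
    unfolding P_def by (rule sum.cong) (auto simp: power2_eq_square)
  also have "\<dots> = (\<Sum>p\<in>{p\<in>Adj. fst p \<in> A \<and> snd p \<notin> A}. n^2)"
    by (rule sum.inter_filter[OF finA, symmetric])
  also have "\<dots> = n^2 * int (cross A)" unfolding cross_def by simp
  finally show ?thesis .
qed

lemma P_cong: "(\<And>x. x \<in> V \<Longrightarrow> a x = b x) \<Longrightarrow> P a = P b"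
  unfolding P_def using AdjV by (intro sum.cong) auto

lemma cross_empty: "cross {} = 0" unfolding cross_def by simp
lemma cross_V: "cross V = 0"
proof -
  have "{p\<in>Adj. fst p \<in> V \<and> snd p \<notin> V} = {}" using AdjV by auto
  then show ?thesis unfolding cross_def by (metis card.empty)
qed

lemma cross_single: "cross {w} = card {y. (w,y)\<in>Adj}"
proof -
  have "{p\<in>Adj. fst p \<in> {w} \<and> snd p \<notin> {w}} = Pair w ` {y. (w,y)\<in>Adj}"
    using irr by force
  then show ?thesis unfolding cross_def by (simp add: card_image inj_on_def)
qed

lemma cross_cosingle: "w \<in> V \<Longrightarrow> cross (V - {w}) = card {y. (w,y)\<in>Adj}"
proof -
  assume wV: "w \<in> V"
  have "{p\<in>Adj. fst p \<in> V - {w} \<and> snd p \<notin> V - {w}} = (\<lambda>y. (y,w)) ` {y. (w,y)\<in>Adj}"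
  proof (intro equalityI subsetI)
    fix p assume "p \<in> {p\<in>Adj. fst p \<in> V - {w} \<and> snd p \<notin> V - {w}}"
    then obtain x y where p: "p = (x,y)" "(x,y) \<in> Adj" "x \<noteq> w" "y \<notin> V - {w}" by (cases p) auto
    then have "y = w" using AdjV by auto
    then show "p \<in> (\<lambda>y. (y,w)) ` {y. (w,y)\<in>Adj}" using p symA by auto
  next
    fix p assume "p \<in> (\<lambda>y. (y,w)) ` {y. (w,y)\<in>Adj}"
    then obtain y where "p = (y,w)" "(w,y) \<in> Adj" by auto
    then show "p \<in> {p\<in>Adj. fst p \<in> V - {w} \<and> snd p \<notin> V - {w}}" using symA irr AdjV by auto
  qed
  then show ?thesis unfolding cross_def by (simp add: card_image inj_on_def)
qed

lemma Fv_nonneg: "valid a \<Longrightarrow> Fv a \<ge> 0"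
  unfolding Fv_def valid_def by (intro sum_nonneg) auto

lemma Fv_ge: "valid a \<Longrightarrow> w \<in> V \<Longrightarrow> Fv a \<ge> a w * (n - a w)"
  unfolding Fv_def valid_def by (rule member_le_sum) (auto simp: finV)

lemma comb_pt:
  fixes m k ax ay bx' by' cx cy :: int
  assumes "(ax = k \<and> cx = 0 \<and> bx' = m \<and> ay = cy \<and> by' = cy) \<or> (ay = k \<and> cy = 0 \<and> by' = m \<and> ax = cx \<and> bx' = cx) \<or> (ax = cx \<and> bx' = cx \<and> ay = cy \<and> by' = cy)"
  shows "m * (ax * (m - ay)) = (m - k) * (cx * (m - cy)) + k * (bx' * (m - by'))"
  using assms by (auto simp: algebra_simps)

lemma final:
  fixes lam d :: int
  assumes va: "valid a" and sp: "card (spl a) \<le> 1"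
    and s3: "sum a V \<ge> 3" and s3': "sum a V \<le> int (card V) * n - 3"
    and n4: "n \<ge> 4"
    and cut: "\<And>A. A \<subseteq> V \<Longrightarrow> A \<noteq> {} \<Longrightarrow> A \<noteq> V \<Longrightarrow> lam \<le> int (cross A)"
    and deg: "\<And>w. w \<in> V \<Longrightarrow> d \<le> int (card {y. (w,y)\<in>Adj})"
    and d1: "d \<ge> 1"
    and big: "n^2 * lam > 2*n*d + 2*n - 4"
  shows "F a > 2*n*d + 2*n - 4"
proof -
  define A where "A = {x\<in>V. a x = n}"
  have AV: "A \<subseteq> V" unfolding A_def by auto
  define \<alpha> where "\<alpha> = (\<lambda>x. if x \<in> A then n else 0)"
  have "spl a = {} \<or> (\<exists>w. spl a = {w})"
  proof (cases "card (spl a)")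
    case 0 then show ?thesis using finspl by simp
  next
    case (Suc m) then have "card (spl a) = 1" using sp by simp
    then show ?thesis by (auto simp: card_1_singleton_iff)
  qed
  then show ?thesis
  proof
    assume sp0: "spl a = {}"
    have aal: "a x = \<alpha> x" if "x \<in> V" for x
      using sp0 va that unfolding spl_def valid_def \<alpha>_def A_def by force
    have "A \<noteq> {}"
    proof
      assume "A = {}"
      then have "sum a V = sum (\<lambda>_. 0) V" using aal unfolding \<alpha>_def by (intro sum.cong) auto
      then show False using s3 by simp
    qed
    moreover have "A \<noteq> V"
    proof
      assume "A = V"
      then have "sum a V = sum (\<lambda>_. n) V" using aal unfolding \<alpha>_def by (intro sum.cong) auto
      then show False using s3' by simp
    qed
    ultimately have "lam \<le> int (cross A)" using cut AV by blast
    then have "n^2 * lam \<le> n^2 * int (cross A)" by (simp add: mult_left_mono)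
    also have "\<dots> = P a" using P_cong[OF aal] P_ind unfolding \<alpha>_def by simp
    finally show ?thesis using Fv_nonneg[OF va] big unfolding F_def by linarith
  next
    assume "\<exists>w. spl a = {w}"
    then obtain w where sw: "spl a = {w}" by blast
    then have wV: "w \<in> V" and k: "0 < a w" "a w < n" unfolding spl_def by auto
    define k where "k = a w"
    have wA: "w \<notin> A" using k unfolding A_def by auto
    define \<beta> where "\<beta> = (\<lambda>x. if x \<in> insert w A then n else 0)"
    have aal: "a x = \<alpha> x" if "x \<in> V" "x \<noteq> w" for x
      using sw va that unfolding spl_def valid_def \<alpha>_def A_def by force
    have key: "n * P a = (n - k) * P \<alpha> + k * P \<beta>"
    proof -
      have "n * P a = (\<Sum>p\<in>Adj. n * (a (fst p) * (n - a (snd p))))"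
        unfolding P_def by (simp add: sum_distrib_left)
      also have "\<dots> = (\<Sum>p\<in>Adj. (n - k) * (\<alpha> (fst p) * (n - \<alpha> (snd p))) + k * (\<beta> (fst p) * (n - \<beta> (snd p))))"
      proof (rule sum.cong[OF refl])
        fix p assume pA: "p \<in> Adj"
        obtain x y where p: "p = (x,y)" by (cases p)
        have xy: "x \<in> V" "y \<in> V" "x \<noteq> y" using pA AdjV irr unfolding p by auto
        show "n * (a (fst p) * (n - a (snd p))) = (n - k) * (\<alpha> (fst p) * (n - \<alpha> (snd p))) + k * (\<beta> (fst p) * (n - \<beta> (snd p)))"
          unfolding p fst_conv snd_conv
        proof (rule comb_pt)
          have e1: "a x = (if x = w then k else \<alpha> x)" "a y = (if y = w then k else \<alpha> y)"
            using aal xy unfolding k_def by auto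
          have e2: "\<alpha> w = 0" using wA unfolding \<alpha>_def by simp
          have e3: "\<beta> x = (if x = w then n else \<alpha> x)" "\<beta> y = (if y = w then n else \<alpha> y)"
            unfolding \<beta>_def \<alpha>_def by auto
          show "(a x = k \<and> \<alpha> x = 0 \<and> \<beta> x = n \<and> a y = \<alpha> y \<and> \<beta> y = \<alpha> y) \<or>
            (a y = k \<and> \<alpha> y = 0 \<and> \<beta> y = n \<and> a x = \<alpha> x \<and> \<beta> x = \<alpha> x) \<or>
            (a x = \<alpha> x \<and> \<beta> x = \<alpha> x \<and> a y = \<alpha> y \<and> \<beta> y = \<alpha> y)"
            using e1 e2 e3 xy(3) by (cases "x = w"; cases "y = w") simp_all
        qed
      qed
      also have "\<dots> = (n - k) * P \<alpha> + k * P \<beta>"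
        unfolding P_def by (simp add: sum.distrib sum_distrib_left)
      finally show ?thesis .
    qed
    have Pa: "P \<alpha> = n^2 * int (cross A)" "P \<beta> = n^2 * int (cross (insert w A))"
      unfolding \<alpha>_def \<beta>_def by (rule P_ind)+
    have Fva: "Fv a \<ge> k * (n - k)" using Fv_ge[OF va wV] unfolding k_def .
    have kn: "k * (n - k) \<ge> n - 1"
    proof -
      have "(k - 1) * (n - 1 - k) \<ge> 0" using k unfolding k_def by simp
      then show ?thesis by (simp add: algebra_simps)
    qed
    have dw: "d \<le> int (card {y. (w,y)\<in>Adj})" using deg wV .
    have nd: "n * d \<ge> n" using d1 n4 by simp
    show ?thesis
    proof (cases "A = {}")
      case True
      have "sum a V = a w + sum a (V - {w})" using wV finV by (simp add: sum.remove)
      also have "sum a (V - {w}) = 0" using aal True unfolding \<alpha>_def by (intro sum.neutral) auto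
      finally have "k \<ge> 3" using s3 unfolding k_def by simp
      have "n * P a = n * (k * n * int (cross {w}))" using key Pa True cross_empty
        by (simp add: power2_eq_square algebra_simps)
      then have "P a = k * n * int (cross {w})" using n4 by simp
      also have "\<dots> \<ge> 3 * n * d"
      proof -
        have "int (cross {w}) \<ge> d" using dw cross_single by simp
        moreover have "k * n \<ge> 3 * n" using \<open>k \<ge> 3\<close> n4 by simp
        ultimately show ?thesis using n4 d1
          by (meson dual_order.trans mult_left_mono mult_right_mono of_nat_0_le_iff order.trans zero_le_numeral mult_nonneg_nonneg le_less)
      qed
      finally show ?thesis using Fva kn nd unfolding F_def by linarith
    next
      case Ane: False
      show ?thesis
      proof (cases "insert w A = V")
        case True
        then have AVw: "A = V - {w}" using wA by auto
        have "sum a V = a w + sum a (V - {w})" using wV finV by (simp add: sum.remove)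
        also have "sum a (V - {w}) = sum (\<lambda>_. n) (V - {w})" using aal AVw unfolding \<alpha>_def by (intro sum.cong) auto
        also have "\<dots> = n * (int (card V) - 1)"
        proof -
          have "Suc 0 \<le> card V" using card_gt_0_iff wV finV by (metis Suc_leI empty_iff)
          then have "int (card V - Suc 0) = int (card V) - 1" by (simp add: of_nat_diff)
          then show ?thesis using wV finV by (simp add: card_Diff_singleton)
        qed
        finally have "n - k \<ge> 3" using s3' unfolding k_def by (simp add: algebra_simps)
        have "n * P a = n * ((n - k) * n * int (cross (V - {w})))" using key Pa True cross_V AVw
          by (simp add: power2_eq_square algebra_simps)
        then have "P a = (n - k) * n * int (cross (V - {w}))" using n4 by simp
        also have "\<dots> \<ge> 3 * n * d"
        proof -
          have "int (cross (V - {w})) \<ge> d" using dw cross_cosingle[OF wV] by simp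
          moreover have "(n - k) * n \<ge> 3 * n" using \<open>n - k \<ge> 3\<close> n4 by simp
          ultimately show ?thesis using n4 d1
            by (meson dual_order.trans mult_left_mono mult_right_mono of_nat_0_le_iff order.trans zero_le_numeral mult_nonneg_nonneg le_less)
        qed
        finally show ?thesis using Fva kn nd unfolding F_def by linarith
      next
        case False
        have c1: "lam \<le> int (cross A)" using cut[OF AV Ane] wA wV by blast
        have c2: "lam \<le> int (cross (insert w A))" using cut[OF _ _ False] AV wV by blast
        have "n * (n^2 * lam) = (n - k) * (n^2 * lam) + k * (n^2 * lam)" by (simp add: algebra_simps)
        also have "\<dots> \<le> (n - k) * P \<alpha> + k * P \<beta>" unfolding Pa
          using c1 c2 k n4 unfolding k_def
          by (intro add_mono mult_left_mono) auto
        finally have "n * (n^2 * lam) \<le> n * P a" using key by simp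
        then have "n^2 * lam \<le> P a" using n4 by simp
        then show ?thesis using Fv_nonneg[OF va] big unfolding F_def by linarith
      qed
    qed
  qed
qed


lemma main_ineq:
  fixes lam d :: int
  assumes va: "valid a"
    and s3: "sum a V \<ge> 3" and s3': "sum a V \<le> int (card V) * n - 3"
    and n4: "n \<ge> 4"
    and cut: "\<And>A. A \<subseteq> V \<Longrightarrow> A \<noteq> {} \<Longrightarrow> A \<noteq> V \<Longrightarrow> lam \<le> int (cross A)"
    and deg: "\<And>w. w \<in> V \<Longrightarrow> d \<le> int (card {y. (w,y)\<in>Adj})"
    and d1: "d \<ge> 1"
    and big: "n^2 * lam > 2*n*d + 2*n - 4"
  shows "F a > 2*n*d + 2*n - 4"
proof -
  obtain b where b: "valid b" "sum b V = sum a V" "card (spl b) \<le> 1" "F b \<le> F a"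
    using smooth[OF va] by blast
  have "F b > 2*n*d + 2*n - 4"
    by (rule final[OF b(1) b(3) _ _ n4 cut deg d1 big]) (use b(2) s3 s3' in auto)
  then show ?thesis using b(4) by linarith
qed

end


lemma sg_edge: "simple_graph G \<Longrightarrow> {x,y} \<in> edges G \<Longrightarrow> x \<in> verts G \<and> y \<in> verts G \<and> x \<noteq> y"
  unfolding simple_graph_def by (metis doubleton_eq_iff)

lemma adj_iff: "simple_graph G \<Longrightarrow> (x,y) \<in> adj_rel G \<longleftrightarrow> {x,y} \<in> edges G"
  unfolding adj_rel_def using sg_edge by fastforce

lemma wg_inst: "simple_graph G \<Longrightarrow> wg (verts G) (adj_rel G)"
  unfolding wg_def
proof (intro conjI allI impI)
  assume sg: "simple_graph G"
  show "finite (verts G)" using sg unfolding simple_graph_def by simp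
  show "adj_rel G \<subseteq> verts G \<times> verts G" using sg_edge[OF sg] unfolding adj_rel_def by auto
  fix x y
  show "(x,x) \<notin> adj_rel G" unfolding adj_rel_def by simp
  show "(x,y) \<in> adj_rel G \<Longrightarrow> (y,x) \<in> adj_rel G" unfolding adj_rel_def by (auto simp: insert_commute)
qed

lemma finite_edges: "simple_graph G \<Longrightarrow> finite (edges G)"
proof -
  assume sg: "simple_graph G"
  have "edges G \<subseteq> (\<lambda>(x,y). {x,y}) ` (verts G \<times> verts G)"
    using sg unfolding simple_graph_def by fast
  moreover have "finite (verts G)" using sg unfolding simple_graph_def by simp
  ultimately show ?thesis using finite_subset by blast
qed

lemma edges_pair: "edges (A,B) = B" by (simp add: edges_def)

lemma verts_K: "verts (complete_graph n) = {0..<n}" unfolding complete_graph_def verts_def by simp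
lemma edge_K: "{a,b} \<in> edges (complete_graph n) \<longleftrightarrow> a < n \<and> b < n \<and> a \<noteq> b"
  unfolding complete_graph_def edges_def by (auto simp: doubleton_eq_iff)

lemma verts_H: "verts (strong_product G K) = verts G \<times> verts K"
  unfolding strong_product_def verts_def by simp

lemma edge_H:
  assumes sg: "simple_graph G"
  shows "{p,q} \<in> edges (strong_product G (complete_graph n)) \<longleftrightarrow>
     p \<in> verts G \<times> {0..<n} \<and> q \<in> verts G \<times> {0..<n} \<and> p \<noteq> q \<and> (fst p = fst q \<or> (fst p, fst q) \<in> adj_rel G)"
proof -
  obtain x1 y1 x2 y2 where p: "p = (x1,y1)" and q: "q = (x2,y2)" by (cases p, cases q)
  have E: "{(x1,y1),(x2,y2)} \<in> edges (strong_product G (complete_graph n)) \<longleftrightarrow>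
     x1 \<in> verts G \<and> x2 \<in> verts G \<and> y1 \<in> verts (complete_graph n) \<and> y2 \<in> verts (complete_graph n) \<and>
        ((x1 = x2 \<and> {y1, y2} \<in> edges (complete_graph n)) \<or> (y1 = y2 \<and> {x1, x2} \<in> edges G) \<or>
         ({x1, x2} \<in> edges G \<and> {y1, y2} \<in> edges (complete_graph n)))"
    unfolding strong_product_def edges_pair
    by (auto simp: doubleton_eq_iff insert_commute)
  show ?thesis unfolding p q E using sg_edge[OF sg] adj_iff[OF sg] by (auto simp: edge_K insert_commute verts_K)
qed


lemma card_filter_sum:
  assumes "finite W" "finite Y"
  shows "card {v\<in>W. f v \<in> Y} = (\<Sum>y\<in>Y. card {v\<in>W. f v = y})"
proof -
  have "card {v\<in>W. f v \<in> Y} = (\<Sum>v\<in>{v\<in>W. f v \<in> Y}. 1)" by simp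
  also have "\<dots> = (\<Sum>y\<in>Y. \<Sum>v\<in>{x. x \<in> {v\<in>W. f v \<in> Y} \<and> f x = y}. 1)"
    by (rule sum.group[symmetric]) (use assms in auto)
  also have "\<dots> = (\<Sum>y\<in>Y. card {v\<in>W. f v = y})"
    by (rule sum.cong[OF refl]) (simp, metis)
  finally show ?thesis .
qed

lemma sum_fst_group:
  assumes "finite X" "finite V" "fst ` X \<subseteq> V"
  shows "(\<Sum>u\<in>X. g (fst u)) = (\<Sum>x\<in>V. of_nat (card {u\<in>X. fst u = x}) * g x)"
proof -
  have "(\<Sum>u\<in>X. g (fst u)) = (\<Sum>x\<in>V. \<Sum>u\<in>{u. u \<in> X \<and> fst u = x}. g (fst u))"
    by (rule sum.group[symmetric]) (use assms in auto)
  also have "\<dots> = (\<Sum>x\<in>V. of_nat (card {u\<in>X. fst u = x}) * g x)"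
    by (rule sum.cong[OF refl]) simp
  finally show ?thesis .
qed

definition OB :: "'b graph \<Rightarrow> 'b set \<Rightarrow> ('b \<times> 'b) set" where
  "OB H X = {(u,v). u \<in> X \<and> v \<in> verts H \<and> v \<notin> X \<and> {u,v} \<in> edges H}"

definition fib :: "('a \<times> nat) set \<Rightarrow> 'a \<Rightarrow> nat" where
  "fib X x = card {u\<in>X. fst u = x}"

lemma fib_le:
  assumes "X \<subseteq> V \<times> {0..<n}"
  shows "fib X x \<le> n"
proof -
  have "{u\<in>X. fst u = x} \<subseteq> {x} \<times> {0..<n}" using assms by auto
  then show ?thesis unfolding fib_def by (metis card_atLeastLessThan card_cartesian_product_singleton card_mono diff_zero finite_SigmaI finite_atLeastLessThan finite.emptyI finite.insertI)
qed

lemma fib_compl: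
  assumes "X \<subseteq> V \<times> {0..<n}" "finite V" "y \<in> V"
  shows "card {v\<in>V \<times> {0..<n} - X. fst v = y} = n - fib X y"
proof -
  have 1: "{v\<in>V \<times> {0..<n} - X. fst v = y} = ({y} \<times> {0..<n}) - {u\<in>X. fst u = y}"
    using assms by auto
  have 2: "{u\<in>X. fst u = y} \<subseteq> {y} \<times> {0..<n}" using assms by auto
  show ?thesis unfolding 1 fib_def using 2
    by (simp add: card_Diff_subset finite_subset card_cartesian_product_singleton)
qed

lemma sum_fib:
  assumes "X \<subseteq> V \<times> {0..<n}" "finite V"
  shows "(\<Sum>x\<in>V. fib X x) = card X"
proof -
  have fX: "finite X" using assms finite_subset by blast
  have "card X = (\<Sum>u\<in>X. (\<lambda>_. 1::nat) (fst u))" by simp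
  also have "\<dots> = (\<Sum>x\<in>V. of_nat (card {u\<in>X. fst u = x}) * 1)"
    by (rule sum_fst_group) (use assms fX in auto)
  finally show ?thesis unfolding fib_def by simp
qed


lemma count_OB:
  assumes sg: "simple_graph G" and XH: "X \<subseteq> verts G \<times> {0..<n}"
  shows "int (card (OB (strong_product G (complete_graph n)) X)) =
    wg.F (verts G) (adj_rel G) (int n) (\<lambda>x. int (fib X x))"
proof -
  interpret wg "verts G" "adj_rel G" "int n" by (rule wg_inst[OF sg])
  define H where "H = strong_product G (complete_graph n)"
  define V where "V = verts G"
  define N where "N = (\<lambda>x. {y. (x,y) \<in> adj_rel G})"
  define W where "W = V \<times> {0..<n} - X"
  define a where "a = fib X"
  have fV: "finite V" using finV V_def by simp
  have fX: "finite X" using XH fV V_def finite_subset by blast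
  have NV: "N x \<subseteq> V" for x using AdjV unfolding N_def V_def by auto
  have fN: "finite (N x)" for x using NV fV finite_subset by blast
  have xN: "x \<notin> N x" for x using irr unfolding N_def by simp
  have vH: "verts H = V \<times> {0..<n}" unfolding H_def V_def verts_H verts_K ..
  define Nb where "Nb = (\<lambda>u::'a \<times> nat. {v\<in>W. fst v \<in> insert (fst u) (N (fst u))})"
  have OBeq: "OB H X = Sigma X Nb"
  proof (intro equalityI subsetI)
    fix p assume "p \<in> OB H X"
    then obtain u v where p: "p = (u,v)" "u \<in> X" "v \<in> verts H" "v \<notin> X" "{u,v} \<in> edges H"
      unfolding OB_def by auto
    then have "fst u = fst v \<or> (fst u, fst v) \<in> adj_rel G" using edge_H[OF sg] unfolding H_def by blast
    then show "p \<in> Sigma X Nb" using p vH unfolding Nb_def W_def N_def by auto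
  next
    fix p assume "p \<in> Sigma X Nb"
    then obtain u v where p: "p = (u,v)" "u \<in> X" "v \<in> Nb u" by auto
    then have "v \<in> V \<times> {0..<n}" "v \<notin> X" "fst v = fst u \<or> (fst u, fst v) \<in> adj_rel G"
      unfolding Nb_def W_def N_def by auto
    moreover have "u \<in> V \<times> {0..<n}" using p XH V_def by auto
    moreover have "u \<noteq> v" using p \<open>v \<notin> X\<close> by auto
    ultimately have "{u,v} \<in> edges H" using edge_H[OF sg] unfolding H_def V_def by auto
    then show "p \<in> OB H X" using p \<open>v \<in> V \<times> {0..<n}\<close> \<open>v \<notin> X\<close> vH unfolding OB_def by auto
  qed
  have fW: "finite W" unfolding W_def using fV by simp
  have cW: "card {v\<in>W. fst v = y} = n - a y" if "y \<in> V" for y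
    unfolding W_def a_def using fib_compl[of X V n y] XH fV that V_def by simp
  define g where "g = (\<lambda>x. (n - a x) + (\<Sum>y\<in>N x. n - a y))"
  have cNb: "card (Nb u) = g (fst u)" if "u \<in> X" for u
  proof -
    have uV: "fst u \<in> V" using that XH V_def by auto
    have "card (Nb u) = (\<Sum>y\<in>insert (fst u) (N (fst u)). card {v\<in>W. fst v = y})"
      unfolding Nb_def by (rule card_filter_sum[OF fW]) (simp add: fN)
    also have "\<dots> = card {v\<in>W. fst v = fst u} + (\<Sum>y\<in>N (fst u). card {v\<in>W. fst v = y})"
      using fN xN by simp
    also have "\<dots> = g (fst u)" unfolding g_def using cW uV NV by (auto intro!: sum.cong)
    finally show ?thesis .
  qed
  have "card (OB H X) = (\<Sum>u\<in>X. card (Nb u))"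
    unfolding OBeq by (rule card_SigmaI) (use fX fW Nb_def in auto)
  also have "\<dots> = (\<Sum>u\<in>X. g (fst u))" using cNb by (rule sum.cong[OF refl])
  also have "\<dots> = (\<Sum>x\<in>V. of_nat (card {u\<in>X. fst u = x}) * g x)"
    by (rule sum_fst_group) (use fX fV XH V_def in auto)
  finally have c1: "card (OB H X) = (\<Sum>x\<in>V. a x * g x)" unfolding a_def fib_def by simp
  have aln: "a x \<le> n" for x unfolding a_def by (rule fib_le[OF XH])
  have "int (card (OB H X)) = (\<Sum>x\<in>V. int (a x) * (int n - int (a x))) +
        (\<Sum>x\<in>V. \<Sum>y\<in>N x. int (a x) * (int n - int (a y)))"
  proof -
    have pt: "int (a x * g x) = int (a x) * (int n - int (a x)) + (\<Sum>y\<in>N x. int (a x) * (int n - int (a y)))" for x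
    proof -
      have e: "int (g x) = (int n - int (a x)) + (\<Sum>y\<in>N x. int n - int (a y))"
        unfolding g_def of_nat_add of_nat_sum using aln by (simp only: of_nat_diff)
      show ?thesis by (simp only: of_nat_mult e distrib_left sum_distrib_left)
    qed
    show ?thesis unfolding c1 of_nat_sum pt by (simp only: sum.distrib)
  qed
  also have "(\<Sum>x\<in>V. \<Sum>y\<in>N x. int (a x) * (int n - int (a y))) =
       (\<Sum>(x,y)\<in>Sigma V N. int (a x) * (int n - int (a y)))"
    by (rule sum.Sigma) (use fV fN in auto)
  also have "Sigma V N = adj_rel G" using AdjV unfolding N_def V_def by auto
  finally show ?thesis unfolding F_def Fv_def P_def H_def V_def a_def by (simp add: split_def)
qed


lemma verts_del[simp]: "verts (del_edges G S) = verts G" unfolding del_edges_def verts_def by simp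
lemma edges_del[simp]: "edges (del_edges G S) = edges G - S" unfolding del_edges_def edges_def by simp

lemma finite_cuts: "simple_graph G \<Longrightarrow> finite (card ` {S. edge_cut G S})"
proof -
  assume sg: "simple_graph G"
  have "{S. edge_cut G S} \<subseteq> Pow (edges G)" unfolding edge_cut_def by auto
  then have "finite {S. edge_cut G S}" using finite_edges[OF sg] finite_subset by blast
  then show ?thesis by simp
qed

lemma cross_ge_lam:
  assumes sg: "simple_graph G" and AV: "A \<subseteq> verts G" and Ane: "A \<noteq> {}" and AnV: "A \<noteq> verts G"
  shows "edge_connectivity G \<le> wg.cross (adj_rel G) A"
proof -
  interpret wg "verts G" "adj_rel G" 0 by (rule wg_inst[OF sg])
  define CP where "CP = {p\<in>adj_rel G. fst p \<in> A \<and> snd p \<notin> A}"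
  define E where "E = (\<lambda>(x,y). {x,y}) ` CP"
  have inj: "inj_on (\<lambda>(x,y). {x,y}) CP"
    unfolding CP_def inj_on_def by (auto simp: doubleton_eq_iff)
  have cE: "card E = cross A" unfolding E_def cross_def CP_def[symmetric] using inj by (simp add: card_image)
  have Esub: "E \<subseteq> edges G" unfolding E_def CP_def using adj_iff[OF sg] by auto
  have stay: "z \<in> A" if "(x,z) \<in> (adj_rel (del_edges G E))\<^sup>*" "x \<in> A" for x z
    using that
  proof (induction rule: rtrancl_induct)
    case base then show ?case .
  next
    case (step z w)
    have "{z,w} \<in> edges G" "{z,w} \<notin> E" "z \<noteq> w" using step(2) unfolding adj_rel_def by auto
    have zA: "z \<in> A" using step.IH step.prems by blast
    show ?case
    proof (rule ccontr)
      assume "w \<notin> A"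
      then have "(z,w) \<in> CP" unfolding CP_def using zA \<open>{z,w} \<in> edges G\<close> \<open>z \<noteq> w\<close>
        unfolding adj_rel_def by auto
      then have "{z,w} \<in> E" unfolding E_def by (metis (no_types, lifting) case_prod_conv image_eqI)
      then show False using \<open>{z,w} \<notin> E\<close> by simp
    qed
  qed
  obtain x where x: "x \<in> A" using Ane by blast
  obtain y where y: "y \<in> verts G" "y \<notin> A" using AV AnV by blast
  have "(x,y) \<notin> (adj_rel (del_edges G E))\<^sup>*" using stay x y by blast
  then have "\<not> graph_connected (del_edges G E)"
    unfolding graph_connected_def using x y AV by auto
  then have "edge_cut G E" unfolding edge_cut_def using Esub by simp
  then have "edge_connectivity G \<le> card E" unfolding edge_connectivity_def
    using finite_cuts[OF sg] by (intro Min_le) auto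
  then show ?thesis using cE by simp
qed

lemma degree_eq:
  assumes sg: "simple_graph G"
  shows "degree G w = card {y. (w,y) \<in> adj_rel G}"
proof -
  have "{e\<in>edges G. w \<in> e} = (\<lambda>y. {w,y}) ` {y. (w,y) \<in> adj_rel G}"
  proof (intro equalityI subsetI)
    fix e assume e: "e \<in> {e\<in>edges G. w \<in> e}"
    then obtain a b where ab: "a \<noteq> b" "e = {a,b}" using sg unfolding simple_graph_def by blast
    then have "e = {w, if a = w then b else a}" using e by auto
    moreover have "(w, if a = w then b else a) \<in> adj_rel G" using e ab calculation
      unfolding adj_rel_def by auto
    ultimately show "e \<in> (\<lambda>y. {w,y}) ` {y. (w,y) \<in> adj_rel G}" by blast
  next
    fix e assume "e \<in> (\<lambda>y. {w,y}) ` {y. (w,y) \<in> adj_rel G}"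
    then show "e \<in> {e\<in>edges G. w \<in> e}" unfolding adj_rel_def by auto
  qed
  moreover have "inj_on (\<lambda>y. {w,y}) {y. (w,y) \<in> adj_rel G}"
    unfolding inj_on_def adj_rel_def by (auto simp: doubleton_eq_iff)
  ultimately show ?thesis unfolding degree_def by (simp add: card_image)
qed

lemma min_deg_le: "simple_graph G \<Longrightarrow> w \<in> verts G \<Longrightarrow> min_degree G \<le> degree G w"
  unfolding min_degree_def simple_graph_def by (intro Min_le) auto

lemma min_deg_in: "simple_graph G \<Longrightarrow> verts G \<noteq> {} \<Longrightarrow> \<exists>w\<in>verts G. min_degree G = degree G w"
proof -
  assume "simple_graph G" "verts G \<noteq> {}"
  then have "Min (degree G ` verts G) \<in> degree G ` verts G"
    unfolding simple_graph_def by (intro Min_in) auto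
  then show ?thesis unfolding min_degree_def by auto
qed

lemma deg_pos:
  assumes sg: "simple_graph G" and con: "graph_connected G" and c2: "card (verts G) \<ge> 2"
    and wV: "w \<in> verts G"
  shows "degree G w \<ge> 1"
proof -
  interpret wg "verts G" "adj_rel G" 0 by (rule wg_inst[OF sg])
  have "card (verts G - {w}) = card (verts G) - 1" using wV finV by (simp add: card_Diff_singleton)
  then have "card (verts G - {w}) \<noteq> 0" using c2 by linarith
  then have "verts G - {w} \<noteq> {}" by (intro notI) simp
  then obtain y where y: "y \<in> verts G" "y \<noteq> w" by blast
  have "\<forall>x\<in>verts G. \<forall>y\<in>verts G. (x,y) \<in> (adj_rel G)\<^sup>*" using con unfolding graph_connected_def by simp
  then have "(w,y) \<in> (adj_rel G)\<^sup>*" using wV y(1) by simp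
  then have "\<exists>z. (w,z) \<in> adj_rel G" using y(2) by (cases rule: converse_rtranclE) auto
  then have "{y. (w,y) \<in> adj_rel G} \<noteq> {}" by blast
  moreover have "{y. (w,y) \<in> adj_rel G} \<subseteq> verts G" using AdjV by auto
  then have "finite {y. (w,y) \<in> adj_rel G}" using finV finite_subset by blast
  ultimately show ?thesis unfolding degree_eq[OF sg] by (simp add: Suc_le_eq card_gt_0_iff)
qed


definition bd :: "'b graph \<Rightarrow> 'b set \<Rightarrow> 'b set set" where
  "bd H X = (\<lambda>(u,v). {u,v}) ` OB H X"

lemma card_bd: "card (bd H X) = card (OB H X)"
proof -
  have "inj_on (\<lambda>(u,v). {u,v}) (OB H X)"
    unfolding inj_on_def OB_def by (auto simp: doubleton_eq_iff)
  then show ?thesis unfolding bd_def by (simp add: card_image)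
qed

lemma bd_sub: "bd H X \<subseteq> edges H" unfolding bd_def OB_def by auto

lemma edges_H_sub: "e \<in> edges (strong_product G K) \<Longrightarrow> e \<subseteq> verts (strong_product G K)"
  unfolding strong_product_def edges_pair verts_H[unfolded strong_product_def] by auto

lemma stay_bd:
  assumes sub: "\<forall>e\<in>edges H. e \<subseteq> verts H"
    and r: "(u,v) \<in> (adj_rel (del_edges H (bd H X)))\<^sup>*" and uX: "u \<in> X"
  shows "v \<in> X"
  using r uX
proof (induction rule: rtrancl_induct)
  case base then show ?case .
next
  case (step z w)
  have zX: "z \<in> X" using step.IH step.prems by blast
  have e: "{z,w} \<in> edges H" "{z,w} \<notin> bd H X" using step(2) unfolding adj_rel_def by auto
  show ?case
  proof (rule ccontr)
    assume "w \<notin> X"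
    moreover have "w \<in> verts H" using sub e(1) by auto
    ultimately have "(z,w) \<in> OB H X" unfolding OB_def using zX e(1) by auto
    then have "{z,w} \<in> bd H X" unfolding bd_def by (metis (no_types, lifting) case_prod_conv image_eqI)
    then show False using e(2) by simp
  qed
qed

lemma comp_in: "r \<in> verts K \<Longrightarrow> {y\<in>verts K. (r,y)\<in>(adj_rel K)\<^sup>*} \<in> components K"
  unfolding components_def by blast

lemma fin_vH: "simple_graph G \<Longrightarrow> finite (verts (strong_product G (complete_graph n)))"
  unfolding verts_H verts_K simple_graph_def by simp

lemma upper:
  assumes sg: "simple_graph G" and n4: "n \<ge> 4" and x0V: "x0 \<in> verts G"
  defines "H \<equiv> strong_product G (complete_graph n)" and "X0 \<equiv> {(x0,0::nat),(x0,1)}"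
  shows "restricted_edge_cut H (bd H X0)"
    and "int (card (bd H X0)) = 2 * (int n - 2) + 2 * int n * int (degree G x0)"
proof -
  have vH: "verts H = verts G \<times> {0..<n}" unfolding H_def verts_H verts_K ..
  have sub: "\<forall>e\<in>edges H. e \<subseteq> verts H" unfolding H_def using edges_H_sub by blast
  have X0H: "X0 \<subseteq> verts G \<times> {0..<n}" unfolding X0_def using x0V n4 by auto
  let ?R = "adj_rel (del_edges H (bd H X0))"
  have edge_in: "(p,q) \<in> ?R" if "p \<in> verts H" "q \<in> verts H" "p \<noteq> q" "fst p = fst q"
     "\<not> (p \<in> X0 \<and> q \<notin> X0)" "\<not> (q \<in> X0 \<and> p \<notin> X0)" for p q
  proof -
    have "{p,q} \<in> edges H" unfolding H_def using edge_H[OF sg] that vH by auto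
    moreover have "{p,q} \<notin> bd H X0" using that unfolding bd_def OB_def by (auto simp: doubleton_eq_iff)
    ultimately show ?thesis unfolding adj_rel_def using that by auto
  qed
  show "restricted_edge_cut H (bd H X0)"
    unfolding restricted_edge_cut_def
  proof (intro conjI ballI)
    show "bd H X0 \<subseteq> edges H" by (rule bd_sub)
    have "((x0,0),(x0,2)) \<notin> ?R\<^sup>*" using stay_bd[OF sub, of "(x0,0)" "(x0,2)" X0] unfolding X0_def by auto
    moreover have "(x0,0) \<in> verts H" "(x0,2) \<in> verts H" using vH x0V n4 by auto
    ultimately show "\<not> graph_connected (del_edges H (bd H X0))"
      unfolding graph_connected_def by auto
  next
    fix C assume "C \<in> components (del_edges H (bd H X0))"
    then obtain r where r: "r \<in> verts H" and C: "C = {y\<in>verts H. (r,y) \<in> ?R\<^sup>*}"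
      unfolding components_def by auto
    have fC: "finite C" using fin_vH[OF sg] unfolding C H_def by simp
    obtain x i where ri: "r = (x,i)" by (cases r)
    have xV: "x \<in> verts G" "i < n" using r vH ri by auto
    show "card C \<ge> 2"
    proof (cases "r \<in> X0")
      case True
      have "X0 \<subseteq> C"
      proof
        fix q assume q: "q \<in> X0"
        show "q \<in> C"
        proof (cases "q = r")
          case True then show ?thesis using C r by auto
        next
          case False
          have "(r,q) \<in> ?R" using edge_in[of r q] q \<open>r \<in> X0\<close> False X0H vH unfolding X0_def by auto
          then show ?thesis using C q X0H vH by auto
        qed
      qed
      then have "card X0 \<le> card C" using fC by (rule card_mono[rotated])
      then show ?thesis unfolding X0_def by simp
    next
      case False
      define j where "j = (if i = 2 then 3 else (2::nat))"
      have j: "j \<noteq> i" "j < n" "2 \<le> j" using n4 unfolding j_def by auto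
      have q: "(x,j) \<in> verts H" "(x,j) \<notin> X0" using xV j vH unfolding X0_def by auto
      have "(r,(x,j)) \<in> ?R" using edge_in[of r "(x,j)"] q r False j ri by auto
      then have "{r,(x,j)} \<subseteq> C" using C r q by auto
      then have "card {r,(x,j)} \<le> card C" using fC by (rule card_mono[rotated])
      then show ?thesis using ri j by simp
    qed
  qed
  show "int (card (bd H X0)) = 2 * (int n - 2) + 2 * int n * int (degree G x0)"
  proof -
    interpret wg "verts G" "adj_rel G" "int n" by (rule wg_inst[OF sg])
    have fb: "fib X0 x = (if x = x0 then 2 else 0)" for x
    proof -
      have "{u\<in>X0. fst u = x} = (if x = x0 then X0 else {})" unfolding X0_def by auto
      then show ?thesis unfolding fib_def X0_def by simp
    qed
    have c0: "int (card (bd H X0)) = F (\<lambda>x. int (fib X0 x))"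
      unfolding card_bd H_def by (rule count_OB[OF sg X0H])
    have c1: "Fv (\<lambda>x. int (fib X0 x)) = 2 * (int n - 2)"
    proof -
      have "Fv (\<lambda>x. int (fib X0 x)) = (\<Sum>x\<in>verts G. if x = x0 then 2 * (int n - 2) else 0)"
        unfolding Fv_def fb by (rule sum.cong) auto
      also have "\<dots> = 2 * (int n - 2)" using x0V finV by simp
      finally show ?thesis .
    qed
    have c2: "P (\<lambda>x. int (fib X0 x)) = 2 * int n * int (degree G x0)"
    proof -
      have "P (\<lambda>x. int (fib X0 x)) = (\<Sum>p\<in>adj_rel G. if fst p = x0 then 2 * int n else 0)"
        unfolding P_def fb
      proof (rule sum.cong[OF refl])
        fix p assume "p \<in> adj_rel G"
        then have "fst p \<noteq> snd p" using irr by (cases p) auto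
        then show "int (if fst p = x0 then 2 else 0) * (int n - int (if snd p = x0 then 2 else 0)) =
          (if fst p = x0 then 2 * int n else 0)" by auto
      qed
      also have "\<dots> = (\<Sum>p\<in>{p\<in>adj_rel G. fst p = x0}. 2 * int n)"
        by (rule sum.inter_filter[OF finA, symmetric])
      also have "{p\<in>adj_rel G. fst p = x0} = Pair x0 ` {y. (x0,y) \<in> adj_rel G}" by force
      finally have "P (\<lambda>x. int (fib X0 x)) = 2 * int n * int (card (Pair x0 ` {y. (x0, y) \<in> adj_rel G}))" by simp
      moreover have "card (Pair x0 ` {y. (x0, y) \<in> adj_rel G}) = degree G x0" unfolding degree_eq[OF sg] by (simp add: card_image inj_on_def)
      ultimately show ?thesis by simp
    qed
    show ?thesis using c0 c1 c2 unfolding F_def by simp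
  qed
qed


lemma sym_adj: "sym (adj_rel K)" unfolding sym_def adj_rel_def by (auto simp: insert_commute)

theorem corollary3p9:
  fixes G :: "'a graph" and n :: nat
  assumes "simple_graph G" and "graph_connected G" and "card (verts G) \<ge> 2"
    and "n \<ge> 4"
    and "min (n^2 * edge_connectivity G) ((n - 1) * (card (verts G) + 2 * card (edges G)))
           > 2 * n * min_degree G + 2 * n - 4"
  shows "super_restricted_edge_connected (strong_product G (complete_graph n))"
proof -
  note sg = assms(1) and con = assms(2) and c2 = assms(3) and n4 = assms(4)
  define H where "H = strong_product G (complete_graph n)"
  define V where "V = verts G"
  interpret wg V "adj_rel G" "int n" unfolding V_def by (rule wg_inst[OF sg])
  have Vne: "V \<noteq> {}" using c2 V_def by auto
  obtain x0 where x0: "x0 \<in> V" "min_degree G = degree G x0" using min_deg_in[OF sg] Vne V_def by auto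
  have d1: "min_degree G \<ge> 1" using deg_pos[OF sg con c2] x0 V_def by simp
  have bign: "n^2 * edge_connectivity G > 2 * n * min_degree G + 2 * n - 4" using assms(5) by simp
  have big: "int n ^ 2 * int (edge_connectivity G) > 2 * int n * int (min_degree G) + 2 * int n - 4"
  proof -
    have "int (2 * n * min_degree G + 2 * n - 4) = 2 * int n * int (min_degree G) + 2 * int n - 4"
      using n4 by (simp add: of_nat_diff)
    then show ?thesis using bign by (metis of_nat_less_iff of_nat_mult of_nat_power)
  qed
  define X0 where "X0 = {(x0,0::nat),(x0,1)}"
  have T1: "restricted_edge_cut H (bd H X0)" unfolding H_def X0_def using upper(1)[OF sg n4] x0 V_def by simp
  have T2: "int (card (bd H X0)) = 2 * (int n - 2) + 2 * int n * int (min_degree G)"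
    unfolding H_def X0_def using upper(2)[OF sg n4] x0 V_def by simp
  have vH: "verts H = V \<times> {0..<n}" unfolding H_def V_def verts_H verts_K ..
  have finH: "finite (verts H)" unfolding H_def by (rule fin_vH[OF sg])
  have sub: "\<forall>e\<in>edges H. e \<subseteq> verts H" unfolding H_def using edges_H_sub by blast
  have finE: "finite (edges H)" using sub finH by (meson Pow_iff finite_Pow_iff finite_subset subsetI)
  show ?thesis
    unfolding super_restricted_edge_connected_def H_def[symmetric]
  proof (intro allI impI)
    fix S assume mS: "min_restricted_edge_cut H S"
    let ?K = "del_edges H S"
    let ?R = "adj_rel ?K"
    show "\<exists>C\<in>components ?K. card C = 2"
    proof (rule ccontr)
      assume no2: "\<not> (\<exists>C\<in>components ?K. card C = 2)"
      have rS: "restricted_edge_cut H S" using mS unfolding min_restricted_edge_cut_def by blast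
      have cST: "card S \<le> card (bd H X0)" using mS T1 unfolding min_restricted_edge_cut_def by blast
      have SE: "S \<subseteq> edges H" and nc: "\<not> graph_connected ?K"
        and c2C: "\<forall>C\<in>components ?K. card C \<ge> 2" using rS unfolding restricted_edge_cut_def by auto
      have c3: "card C \<ge> 3" if "C \<in> components ?K" for C
        using c2C no2 that by force
      have "verts ?K \<noteq> {}" using Vne vH n4 by auto
      then obtain p q where pq: "p \<in> verts H" "q \<in> verts H" "(p,q) \<notin> ?R\<^sup>*"
        using nc unfolding graph_connected_def by auto
      define C where "C = {y\<in>verts ?K. (p,y)\<in>?R\<^sup>*}"
      define D where "D = {y\<in>verts ?K. (q,y)\<in>?R\<^sup>*}"
      have C3: "card C \<ge> 3" unfolding C_def by (rule c3, rule comp_in) (use pq in simp)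
      have D3: "card D \<ge> 3" unfolding D_def by (rule c3, rule comp_in) (use pq in simp)
      have symR: "sym (?R\<^sup>*)" by (rule sym_rtrancl[OF sym_adj])
      have DC: "D \<subseteq> verts H - C"
      proof
        fix r assume rD: "r \<in> D"
        show "r \<in> verts H - C"
        proof
          show "r \<in> verts H" using rD unfolding D_def by simp
          show "r \<notin> C"
          proof
            assume "r \<in> C"
            then have "(p,r) \<in> ?R\<^sup>*" unfolding C_def by simp
            moreover have "(r,q) \<in> ?R\<^sup>*" using rD symR unfolding D_def by (simp add: symD)
            ultimately show False using pq(3) by (meson rtrancl_trans)
          qed
        qed
      qed
      have CH: "C \<subseteq> verts H" unfolding C_def by auto
      have "card (verts H - C) \<ge> 3" using D3 card_mono[OF _ DC] finH by (meson finite_Diff le_trans)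
      moreover have "card (verts H - C) = card V * n - card C"
        using CH finH vH by (simp add: card_Diff_subset finite_subset card_cartesian_product)
      moreover have "card C \<le> card V * n" using card_mono[OF finH CH] vH by (simp add: card_cartesian_product)
      ultimately have "card C + 3 \<le> card V * n" by linarith
      then have "int (card C) + 3 \<le> int (card V * n)" by linarith
      then have sumC: "int (card C) \<le> int (card V) * int n - 3" by simp
      have bdS: "bd H C \<subseteq> S"
      proof
        fix e assume "e \<in> bd H C"
        then obtain u v where e: "e = {u,v}" "u \<in> C" "v \<in> verts H" "v \<notin> C" "{u,v} \<in> edges H"
          unfolding bd_def OB_def by auto
        show "e \<in> S"
        proof (rule ccontr)
          assume "e \<notin> S"
          then have "(u,v) \<in> ?R" using e unfolding adj_rel_def by auto
          moreover have "(p,u) \<in> ?R\<^sup>*" using e unfolding C_def by simp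
          ultimately have "(p,v) \<in> ?R\<^sup>*" by simp
          then show False using e unfolding C_def by simp
        qed
      qed
      have fS: "finite S" using SE finE finite_subset by blast
      have "card (bd H C) \<le> card S" using card_mono[OF fS bdS] .
      then have cOB: "card (OB H C) \<le> card S" unfolding card_bd .
      have CH': "C \<subseteq> verts G \<times> {0..<n}" using CH vH V_def by simp
      have eqF: "int (card (OB H C)) = F (\<lambda>x. int (fib C x))"
        unfolding H_def V_def by (rule count_OB[OF sg CH'])
      have va: "valid (\<lambda>x. int (fib C x))" unfolding valid_def using fib_le[OF CH'] by simp
      have sumF: "sum (\<lambda>x. int (fib C x)) V = int (card C)"
        using sum_fib[OF CH'] finV V_def by (metis of_nat_sum)
      have "F (\<lambda>x. int (fib C x)) > 2 * int n * int (min_degree G) + 2 * int n - 4"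
      proof (rule main_ineq[OF va])
        show "3 \<le> sum (\<lambda>x. int (fib C x)) V" using sumF C3 by simp
        show "sum (\<lambda>x. int (fib C x)) V \<le> int (card V) * int n - 3" using sumF sumC by simp
        show "4 \<le> int n" using n4 by simp
        show "int (edge_connectivity G) \<le> int (cross A)" if "A \<subseteq> V" "A \<noteq> {}" "A \<noteq> V" for A
          using cross_ge_lam[OF sg] that V_def by simp
        show "int (min_degree G) \<le> int (card {y. (w, y) \<in> adj_rel G})" if "w \<in> V" for w
          using min_deg_le[OF sg] degree_eq[OF sg] that V_def by simp
        show "1 \<le> int (min_degree G)" using d1 by simp
        show "2 * int n * int (min_degree G) + 2 * int n - 4 < int n ^ 2 * int (edge_connectivity G)"
          using big .
      qed
      moreover have "int (card (OB H C)) \<le> int (card S)" using cOB by simp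
      ultimately have "int (card S) > 2 * int n * int (min_degree G) + 2 * int n - 4" using eqF by linarith
      then have "int (card S) > int (card (bd H X0))" unfolding T2 by (simp add: algebra_simps)
      then show False using cST by simp
    qed
  qed
qed

end
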